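(* Let $\mathbb{X}$ be a finite set, $\mathcal{H}_A$ a finite-dimensional Hilbert space, and $\{\rho_A^x\}_{x\in\mathbb{X}}$ density operators on $\mathcal{H}_A$. Then the barycentric quantum Rényi leakage satisfies $\mathcal{B}(X\rightarrow A)_{\rho_A}=\log(\mu^\star)$, where $\mu^\star$ is the optimal value of the optimization problem \[ \min_{\pi\in\Delta(\mathbb{X}),\,\mu\in\mathbb{R}}\ \mu\quad\text{subject to}\quad \rho_A^x\leq\mu\sum_{x'\in\mathbb{X}}\pi(x')\rho_A^{x'}\ \ \text{for all }x\in\mathbb{X} \] (operator inequalities).
   Context: All logarithms are base 2. $\Delta(\mathbb{X})$ is the set of probability mass functions on $\mathbb{X}$. For a density operator $\rho$ and positive semi-definite $\sigma$, $\widetilde{D}_\infty(\rho\|\sigma)=\log\big(\inf\{\mu\in\mathbb{R}:\rho\leq\mu\sigma\}\big)$ ($+\infty$ if the support of $\rho$ is not contained in that of $\sigma$). The barycentric quantum Rényi leakage is $\mathcal{B}(X\rightarrow A)_{\rho_A}=\min_{\pi\in\Delta(\mathbb{X})}\max_{x\in\mathbb{X}}\widetilde{D}_\infty\big(\rho_A^x\,\|\,\sum_{x'}\pi(x')\rho_A^{x'}\big)$. *)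

theory Defs
  imports Complex_Main "HOL-Library.Extended_Real" "Jordan_Normal_Form.Matrix" "Jordan_Normal_Form.Conjugate"
begin

text \<open>Operators on the d-dimensional Hilbert space C^d are d x d complex matrices.\<close>

definition mtrace :: "complex mat \<Rightarrow> complex" where
  "mtrace A = (\<Sum>i<dim_row A. A $$ (i, i))"

definition psd :: "nat \<Rightarrow> complex mat \<Rightarrow> bool" where
  "psd d A \<longleftrightarrow> A \<in> carrier_mat d d \<and>
     (\<forall>v \<in> carrier_vec d. (A *\<^sub>v v) \<bullet>c v \<in> \<real> \<and> 0 \<le> Re ((A *\<^sub>v v) \<bullet>c v))"

definition op_le :: "nat \<Rightarrow> complex mat \<Rightarrow> complex mat \<Rightarrow> bool" where
  "op_le d A B \<longleftrightarrow> A \<in> carrier_mat d d \<and> B \<in> carrier_mat d d \<and> psd d (B - A)"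

definition density_op :: "nat \<Rightarrow> complex mat \<Rightarrow> bool" where
  "density_op d \<rho> \<longleftrightarrow> psd d \<rho> \<and> mtrace \<rho> = 1"

text \<open>Support (= range, for psd operators) of an operator.\<close>
definition supp_op :: "nat \<Rightarrow> complex mat \<Rightarrow> complex vec set" where
  "supp_op d A = {A *\<^sub>v v | v. v \<in> carrier_vec d}"

definition Dmax :: "nat \<Rightarrow> complex mat \<Rightarrow> complex mat \<Rightarrow> ereal" where
  "Dmax d \<rho> \<sigma> = (if supp_op d \<rho> \<subseteq> supp_op d \<sigma>
      then ereal (log 2 (Inf {\<mu>::real. op_le d \<rho> (complex_of_real \<mu> \<cdot>\<^sub>m \<sigma>)}))
      else \<infinity>)"

definition pmfs :: "('x::finite \<Rightarrow> real) set" where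
  "pmfs = {\<pi>. (\<forall>x. 0 \<le> \<pi> x) \<and> (\<Sum>x\<in>UNIV. \<pi> x) = 1}"

definition mixture :: "nat \<Rightarrow> ('x::finite \<Rightarrow> real) \<Rightarrow> ('x \<Rightarrow> complex mat) \<Rightarrow> complex mat" where
  "mixture d \<pi> \<rho> = mat d d (\<lambda>(i, j). \<Sum>x'\<in>UNIV. complex_of_real (\<pi> x') * \<rho> x' $$ (i, j))"

definition barycentric_leakage :: "nat \<Rightarrow> ('x::finite \<Rightarrow> complex mat) \<Rightarrow> ereal" where
  "barycentric_leakage d \<rho> =
     (INF \<pi>\<in>pmfs. Max (range (\<lambda>x. Dmax d (\<rho> x) (mixture d \<pi> \<rho>))))"

end

theory Submission
  imports Defs
begin

lemma cip_sum: "u \<in> carrier_vec d \<Longrightarrow> w \<in> carrier_vec d \<Longrightarrow> u \<bullet>c w = (\<Sum>i<d. u$i * cnj (w$i))"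
  by (auto simp: scalar_prod_def lessThan_atLeast0 intro!: sum.cong)

lemma mv_idx: "A \<in> carrier_mat d d \<Longrightarrow> v \<in> carrier_vec d \<Longrightarrow> i<d \<Longrightarrow> (A *\<^sub>v v)$i = (\<Sum>j<d. A$$(i,j) * v$j)"
  by (auto simp: scalar_prod_def lessThan_atLeast0 row_def intro!: sum.cong)

definition herm :: "nat \<Rightarrow> complex mat \<Rightarrow> bool" where
  "herm d A \<longleftrightarrow> A \<in> carrier_mat d d \<and> (\<forall>i<d. \<forall>j<d. A$$(i,j) = cnj (A$$(j,i)))"

lemma cip_add_left: "(u1::complex vec) \<in> carrier_vec d \<Longrightarrow> u2 \<in> carrier_vec d \<Longrightarrow> w \<in> carrier_vec d \<Longrightarrow>
  (u1 + u2) \<bullet>c w = u1 \<bullet>c w + u2 \<bullet>c w"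
  by (subst (1 2 3) cip_sum[of _ d], auto simp: distrib_right sum.distrib)

lemma cip_minus_left: "(u1::complex vec) \<in> carrier_vec d \<Longrightarrow> u2 \<in> carrier_vec d \<Longrightarrow> w \<in> carrier_vec d \<Longrightarrow>
  (u1 - u2) \<bullet>c w = u1 \<bullet>c w - u2 \<bullet>c w"
  by (subst (1 2 3) cip_sum[of _ d], auto simp: left_diff_distrib sum_subtractf)

lemma cip_smult_left: "(u::complex vec) \<in> carrier_vec d \<Longrightarrow> w \<in> carrier_vec d \<Longrightarrow>
  (c \<cdot>\<^sub>v u) \<bullet>c w = c * (u \<bullet>c w)"
  by (simp add: cip_sum sum_distrib_left mult.assoc)

lemma cip_add_right: "(u::complex vec) \<in> carrier_vec d \<Longrightarrow> w1 \<in> carrier_vec d \<Longrightarrow> w2 \<in> carrier_vec d \<Longrightarrow>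
  u \<bullet>c (w1 + w2) = u \<bullet>c w1 + u \<bullet>c w2"
  by (subst (1 2 3) cip_sum[of _ d], auto simp: distrib_left sum.distrib)

lemma cip_minus_right: "(u::complex vec) \<in> carrier_vec d \<Longrightarrow> w1 \<in> carrier_vec d \<Longrightarrow> w2 \<in> carrier_vec d \<Longrightarrow>
  u \<bullet>c (w1 - w2) = u \<bullet>c w1 - u \<bullet>c w2"
  by (subst (1 2 3) cip_sum[of _ d], auto simp: right_diff_distrib sum_subtractf)

lemma cip_smult_right: "(u::complex vec) \<in> carrier_vec d \<Longrightarrow> w \<in> carrier_vec d \<Longrightarrow>
  u \<bullet>c (c \<cdot>\<^sub>v w) = cnj c * (u \<bullet>c w)"
  by (simp add: cip_sum sum_distrib_left ac_simps)

lemma cip_cnj: "(u::complex vec) \<in> carrier_vec d \<Longrightarrow> w \<in> carrier_vec d \<Longrightarrow> cnj (u \<bullet>c w) = w \<bullet>c u"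
  by (simp add: cip_sum mult.commute)

lemma cip_self: "(u::complex vec) \<in> carrier_vec d \<Longrightarrow> u \<bullet>c u = complex_of_real (\<Sum>i<d. (cmod (u$i))^2)"
  by (simp only: cip_sum of_real_sum complex_norm_square)

lemma cip_self_re: "(u::complex vec) \<in> carrier_vec d \<Longrightarrow> Re (u \<bullet>c u) = (\<Sum>i<d. (cmod (u$i))^2)"
  by (simp add: cip_self)

lemma cip_self_zero: "(u::complex vec) \<in> carrier_vec d \<Longrightarrow> u \<bullet>c u = 0 \<Longrightarrow> u = 0\<^sub>v d"
proof -
  assume u: "(u::complex vec) \<in> carrier_vec d" and z: "u \<bullet>c u = 0"
  have "(\<Sum>i<d. (cmod (u$i))^2) = 0" using cip_self_re[OF u] z by simp
  hence "\<forall>i\<in>{..<d}. (cmod (u$i))^2 = 0" by (subst (asm) sum_nonneg_eq_0_iff) auto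
  thus ?thesis using u by (intro eq_vecI) auto
qed

lemma herm_swap: assumes "herm d A" "u \<in> carrier_vec d" "w \<in> carrier_vec d"
  shows "(A *\<^sub>v u) \<bullet>c w = u \<bullet>c (A *\<^sub>v w)"
proof -
  have A: "A \<in> carrier_mat d d" and h: "\<And>i j. i<d \<Longrightarrow> j<d \<Longrightarrow> A$$(i,j) = cnj (A$$(j,i))"
    using assms(1) unfolding herm_def by blast+
  have "(A *\<^sub>v u) \<bullet>c w = (\<Sum>i<d. (A *\<^sub>v u)$i * cnj (w$i))"
    by (rule cip_sum) (use A assms in auto)
  also have "\<dots> = (\<Sum>i<d. \<Sum>j<d. A$$(i,j) * u$j * cnj (w$i))"
    by (intro sum.cong refl) (simp add: mv_idx[OF A assms(2)] sum_distrib_right)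
  also have "\<dots> = (\<Sum>j<d. \<Sum>i<d. A$$(i,j) * u$j * cnj (w$i))" by (rule sum.swap)
  also have "\<dots> = (\<Sum>j<d. u$j * cnj ((A *\<^sub>v w)$j))"
  proof (intro sum.cong refl)
    fix j assume j: "j \<in> {..<d}"
    have "(\<Sum>i<d. A$$(i,j) * u$j * cnj (w$i)) = (\<Sum>i<d. u$j * (cnj (A$$(j,i)) * cnj (w$i)))"
    proof (intro sum.cong refl)
      fix i assume i: "i \<in> {..<d}"
      have e: "A$$(i,j) = cnj (A$$(j,i))" using i j by (intro h) auto
      show "A$$(i,j) * u$j * cnj (w$i) = u$j * (cnj (A$$(j,i)) * cnj (w$i))"
        unfolding e by (simp add: mult_ac)
    qed
    also have "\<dots> = u$j * cnj ((A *\<^sub>v w)$j)"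
      using j by (simp add: mv_idx[OF A assms(3)] sum_distrib_left)
    finally show "(\<Sum>i<d. A$$(i,j) * u$j * cnj (w$i)) = u$j * cnj ((A *\<^sub>v w)$j)" .
  qed
  also have "\<dots> = u \<bullet>c (A *\<^sub>v w)"
    by (rule cip_sum[symmetric]) (use A assms in auto)
  finally show ?thesis .
qed

lemma lin_orth: assumes A: "(A::complex mat) \<in> carrier_mat d d" and w: "w \<in> carrier_vec d" and x: "x \<in> carrier_vec d"
  and h: "\<And>j. j<d \<Longrightarrow> x$j = 0 \<or> w \<bullet>c col A j = 0"
  shows "w \<bullet>c (A *\<^sub>v x) = 0"
proof -
  have "w \<bullet>c (A *\<^sub>v x) = (\<Sum>i<d. w$i * cnj ((A *\<^sub>v x)$i))"
    by (rule cip_sum) (use A w x in auto)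
  also have "\<dots> = (\<Sum>i<d. \<Sum>j<d. w$i * cnj (A$$(i,j)) * cnj (x$j))"
    by (intro sum.cong refl) (simp add: mv_idx[OF A x] sum_distrib_left mult_ac)
  also have "\<dots> = (\<Sum>j<d. \<Sum>i<d. w$i * cnj (A$$(i,j)) * cnj (x$j))" by (rule sum.swap)
  also have "\<dots> = (\<Sum>j<d. cnj (x$j) * (w \<bullet>c col A j))"
  proof (intro sum.cong refl)
    fix j assume j: "j \<in> {..<d}"
    have "w \<bullet>c col A j = (\<Sum>i<d. w$i * cnj (col A j $ i))"
      by (rule cip_sum) (use A w in auto)
    also have "\<dots> = (\<Sum>i<d. w$i * cnj (A$$(i,j)))"
      using A j by (intro sum.cong refl) auto
    finally show "(\<Sum>i<d. w$i * cnj (A$$(i,j)) * cnj (x$j)) = cnj (x$j) * (w \<bullet>c col A j)"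
      by (simp add: sum_distrib_left mult_ac)
  qed
  also have "\<dots> = 0" using h by (intro sum.neutral) auto
  finally show ?thesis .
qed


lemma vec_eq_from_minus: "(u::complex vec) \<in> carrier_vec d \<Longrightarrow> a \<in> carrier_vec d \<Longrightarrow> u - a = 0\<^sub>v d \<Longrightarrow> u = a"
  by (metis carrier_vecD index_minus_vec(1) index_zero_vec(1) eq_vecI right_minus_eq index_minus_vec(2))

lemma proj_aux:
  fixes A :: "complex mat"
  assumes A: "A \<in> carrier_mat d d"
  shows "k \<le> d \<Longrightarrow> v \<in> carrier_vec d \<Longrightarrow> \<exists>x\<in>carrier_vec d. (\<forall>j. k \<le> j \<longrightarrow> j < d \<longrightarrow> x$j = 0) \<and> (\<forall>j<k. (v - A *\<^sub>v x) \<bullet>c col A j = 0)"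
proof (induction k arbitrary: v)
  case 0
  show ?case by (rule bexI[of _ "0\<^sub>v d"]) auto
next
  case (Suc k)
  have k: "k < d" using Suc.prems by auto
  define u where "u = col A k"
  have u: "u \<in> carrier_vec d" using A k unfolding u_def by auto
  obtain xv where xv: "xv \<in> carrier_vec d" "\<forall>j. k \<le> j \<longrightarrow> j < d \<longrightarrow> xv$j = 0"
     "\<forall>j<k. (v - A *\<^sub>v xv) \<bullet>c col A j = 0"
    using Suc.IH[of v] Suc.prems by auto
  obtain xu where xu: "xu \<in> carrier_vec d" "\<forall>j. k \<le> j \<longrightarrow> j < d \<longrightarrow> xu$j = 0"
     "\<forall>j<k. (u - A *\<^sub>v xu) \<bullet>c col A j = 0"
    using Suc.IH[of u] Suc.prems u by auto
  define r where "r = u - A *\<^sub>v xu"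
  define w0 where "w0 = v - A *\<^sub>v xv"
  have r: "r \<in> carrier_vec d" unfolding r_def using u xu A by auto
  have w0: "w0 \<in> carrier_vec d" unfolding w0_def using Suc.prems xv A by auto
  have colj: "\<And>j. j < d \<Longrightarrow> col A j \<in> carrier_vec d" using A by auto
  show ?case
  proof (cases "r \<bullet>c r = 0")
    case True
    hence "r = 0\<^sub>v d" using cip_self_zero[OF r] by auto
    hence uA: "u = A *\<^sub>v xu" using vec_eq_from_minus[OF u _ ] xu A unfolding r_def by auto
    have "w0 \<bullet>c (A *\<^sub>v xu) = 0"
      by (rule lin_orth[OF A w0 xu(1)]) (metis w0_def xu(2) xv(3) not_le)
    hence "w0 \<bullet>c col A k = 0" using uA unfolding u_def by simp
    hence "\<forall>j<Suc k. (v - A *\<^sub>v xv) \<bullet>c col A j = 0" using xv(3) unfolding w0_def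
      using less_Suc_eq by auto
    thus ?thesis using xv(1,2) by (intro bexI[of _ xv]) auto
  next
    case False
    define c where "c = (w0 \<bullet>c r) / (r \<bullet>c r)"
    define x where "x = xv + c \<cdot>\<^sub>v (unit_vec d k - xu)"
    have x: "x \<in> carrier_vec d" unfolding x_def using xv xu by auto
    have eq: "v - A *\<^sub>v x = w0 - c \<cdot>\<^sub>v r"
    proof (rule eq_vecI)
      fix i assume "i < dim_vec (w0 - c \<cdot>\<^sub>v r)"
      hence i: "i < d" using w0 r by auto
      have "(A *\<^sub>v x) $ i = (\<Sum>j<d. A$$(i,j) * (xv$j + c * ((if j = k then 1 else 0) - xu$j)))"
        using i A x xv xu k by (subst mv_idx[OF A x i]) (auto simp: x_def intro!: sum.cong)
      also have "\<dots> = (\<Sum>j<d. A$$(i,j) * xv$j + c * (A$$(i,j) * (if j = k then 1 else 0)) - c * (A$$(i,j) * xu$j))"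
        by (intro sum.cong refl) (simp add: ring_distribs)
      also have "\<dots> = (\<Sum>j<d. A$$(i,j) * xv$j) + c * (\<Sum>j<d. A$$(i,j) * (if j = k then 1 else 0)) - c * (\<Sum>j<d. A$$(i,j) * xu$j)"
        by (simp add: sum.distrib sum_subtractf sum_distrib_left)
      also have "(\<Sum>j<d. A$$(i,j) * (if j = k then 1 else 0)) = (\<Sum>j<d. if j = k then A$$(i,k) else 0)"
        by (intro sum.cong) auto
      also have "\<dots> = A$$(i,k)" using k by simp
      also have "(\<Sum>j<d. A$$(i,j) * xv$j) + c * A$$(i,k) - c * (\<Sum>j<d. A$$(i,j) * xu$j) = (\<Sum>j<d. A$$(i,j) * xv$j) + c * (A$$(i,k) - (\<Sum>j<d. A$$(i,j) * xu$j))"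
        by (simp add: ring_distribs)
      finally have "(A *\<^sub>v x) $ i = (A *\<^sub>v xv)$i + c * (A$$(i,k) - (A *\<^sub>v xu)$i)"
        by (simp only: mv_idx[OF A xv(1) i] mv_idx[OF A xu(1) i])
      thus "(v - A *\<^sub>v x) $ i = (w0 - c \<cdot>\<^sub>v r) $ i"
        using i A xv xu Suc.prems k u unfolding w0_def r_def u_def by (auto simp: algebra_simps)
    qed (use w0 r A x Suc.prems in auto)
    have rorth: "\<forall>j<k. r \<bullet>c col A j = 0" using xu(3) unfolding r_def by auto
    have worth: "\<forall>j<k. w0 \<bullet>c col A j = 0" using xv(3) unfolding w0_def by auto
    have cr: "c \<cdot>\<^sub>v r \<in> carrier_vec d" using r by auto
    have o1: "\<forall>j<k. (w0 - c \<cdot>\<^sub>v r) \<bullet>c col A j = 0"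
      using rorth worth k by (auto simp: cip_minus_left[OF w0 cr colj] cip_smult_left[OF r colj])
    have "(w0 - c \<cdot>\<^sub>v r) \<bullet>c r = w0 \<bullet>c r - c * (r \<bullet>c r)"
      using cip_minus_left[OF w0 cr r] cip_smult_left[OF r r] by simp
    hence o2: "(w0 - c \<cdot>\<^sub>v r) \<bullet>c r = 0"
      using False unfolding c_def by simp
    have o3: "(w0 - c \<cdot>\<^sub>v r) \<bullet>c (A *\<^sub>v xu) = 0"
      by (rule lin_orth[OF A _ xu(1)]) (use w0 r in simp, metis xu(2) o1 not_le)
    have uA: "col A k = r + A *\<^sub>v xu" unfolding r_def u_def[symmetric]
      using u xu A by (intro eq_vecI) auto
    have "(w0 - c \<cdot>\<^sub>v r) \<bullet>c col A k = 0"
      unfolding uA using o2 o3 by (subst cip_add_right[of _ d]) (use w0 r xu A in auto)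
    hence "\<forall>j<Suc k. (v - A *\<^sub>v x) \<bullet>c col A j = 0" unfolding eq using o1 less_Suc_eq by auto
    moreover have "\<forall>j. Suc k \<le> j \<longrightarrow> j < d \<longrightarrow> x$j = 0"
      using xv(1,2) xu(1,2) by (auto simp: x_def)
    ultimately show ?thesis using x by blast
  qed
qed

lemma proj:
  assumes h: "herm d A" and v: "v \<in> carrier_vec d"
  shows "\<exists>x\<in>carrier_vec d. A *\<^sub>v (v - A *\<^sub>v x) = 0\<^sub>v d"
proof -
  have A: "A \<in> carrier_mat d d" and hh: "\<And>i j. i<d \<Longrightarrow> j<d \<Longrightarrow> A$$(i,j) = cnj (A$$(j,i))"
    using h unfolding herm_def by blast+
  obtain x where x: "x \<in> carrier_vec d" "\<forall>j<d. (v - A *\<^sub>v x) \<bullet>c col A j = 0"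
    using proj_aux[OF A order.refl v] by auto
  define w where "w = v - A *\<^sub>v x"
  have w: "w \<in> carrier_vec d" unfolding w_def using v x A by auto
  have "A *\<^sub>v w = 0\<^sub>v d"
  proof (rule eq_vecI)
    fix j assume "j < dim_vec (0\<^sub>v d :: complex vec)"
    hence j: "j < d" by auto
    have "w \<bullet>c col A j = (\<Sum>i<d. w$i * cnj (col A j $ i))" by (rule cip_sum) (use w A j in auto)
    also have "\<dots> = (\<Sum>i<d. A$$(j,i) * w$i)"
    proof (intro sum.cong refl)
      fix i assume i: "i \<in> {..<d}"
      have e: "A$$(i,j) = cnj (A$$(j,i))" using i j by (intro hh) auto
      show "w$i * cnj (col A j $ i) = A$$(j,i) * w$i" using i j A e by simp
    qed
    also have "\<dots> = (A *\<^sub>v w) $ j" using mv_idx[OF A w j] by simp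
    finally show "(A *\<^sub>v w) $ j = 0\<^sub>v d $ j" using x(2) j unfolding w_def by simp
  qed (use A in auto)
  thus ?thesis using x(1) unfolding w_def by auto
qed


lemma mv_unit: assumes A: "(A::complex mat) \<in> carrier_mat d d" and j: "j < d"
  shows "A *\<^sub>v unit_vec d j = col A j"
proof (rule eq_vecI)
  fix i assume "i < dim_vec (col A j)"
  hence i: "i < d" using A by auto
  have "(A *\<^sub>v unit_vec d j) $ i = (\<Sum>l<d. A$$(i,l) * unit_vec d j $ l)"
    by (rule mv_idx[OF A _ i]) auto
  also have "\<dots> = (\<Sum>l<d. if l = j then A$$(i,j) else 0)" by (intro sum.cong) (auto simp: unit_vec_def)
  also have "\<dots> = A$$(i,j)" using j by simp
  finally show "(A *\<^sub>v unit_vec d j) $ i = col A j $ i" using i j A by simp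
qed (use A in auto)

lemma cip_unit_right: assumes "(u::complex vec) \<in> carrier_vec d" "i < d"
  shows "u \<bullet>c unit_vec d i = u $ i"
proof -
  have "u \<bullet>c unit_vec d i = (\<Sum>l<d. u$l * cnj (unit_vec d i $ l))" by (rule cip_sum) (use assms in auto)
  also have "\<dots> = (\<Sum>l<d. if l = i then u$i else 0)" by (intro sum.cong) (auto simp: unit_vec_def)
  also have "\<dots> = u$i" using assms by simp
  finally show ?thesis .
qed

lemma B_unit: assumes A: "(A::complex mat) \<in> carrier_mat d d" and i: "i < d" and j: "j < d"
  shows "(A *\<^sub>v unit_vec d j) \<bullet>c unit_vec d i = A$$(i,j)"
  using A i j by (simp add: mv_unit cip_unit_right[of _ d])

lemma qf_two: assumes A: "(A::complex mat) \<in> carrier_mat d d" and i: "i < d" and j: "j < d"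
  shows "(A *\<^sub>v (unit_vec d i + c \<cdot>\<^sub>v unit_vec d j)) \<bullet>c (unit_vec d i + c \<cdot>\<^sub>v unit_vec d j)
     = A$$(i,i) + cnj c * A$$(j,i) + c * A$$(i,j) + c * cnj c * A$$(j,j)"
proof -
  let ?ei = "unit_vec d i :: complex vec" and ?ej = "unit_vec d j :: complex vec"
  have ei: "?ei \<in> carrier_vec d" and ej: "?ej \<in> carrier_vec d" by auto
  have cej: "c \<cdot>\<^sub>v ?ej \<in> carrier_vec d" by auto
  have Aei: "A *\<^sub>v ?ei \<in> carrier_vec d" and Aej: "A *\<^sub>v ?ej \<in> carrier_vec d" using A by auto
  have cAej: "c \<cdot>\<^sub>v (A *\<^sub>v ?ej) \<in> carrier_vec d" using Aej by auto
  have m: "A *\<^sub>v (?ei + c \<cdot>\<^sub>v ?ej) = A *\<^sub>v ?ei + c \<cdot>\<^sub>v (A *\<^sub>v ?ej)"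
    using A by (simp add: mult_add_distrib_mat_vec[OF A ei cej] mult_mat_vec[OF A ej])
  have "(A *\<^sub>v (?ei + c \<cdot>\<^sub>v ?ej)) \<bullet>c (?ei + c \<cdot>\<^sub>v ?ej)
     = (A *\<^sub>v ?ei) \<bullet>c ?ei + (A *\<^sub>v ?ei) \<bullet>c (c \<cdot>\<^sub>v ?ej) + ((c \<cdot>\<^sub>v (A *\<^sub>v ?ej)) \<bullet>c ?ei + (c \<cdot>\<^sub>v (A *\<^sub>v ?ej)) \<bullet>c (c \<cdot>\<^sub>v ?ej))"
    unfolding m cip_add_left[OF Aei cAej add_carrier_vec[OF ei cej]]
      cip_add_right[OF Aei ei cej] cip_add_right[OF cAej ei cej] ..
  also have "\<dots> = A$$(i,i) + cnj c * A$$(j,i) + c * A$$(i,j) + c * cnj c * A$$(j,j)"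
    using A i j Aei Aej ei ej
    by (simp add: cip_smult_right[of _ d] cip_smult_left[of _ d] B_unit mult_ac)
  finally show ?thesis .
qed

lemma psd_herm: assumes "psd d A" shows "herm d A"
proof -
  have A: "A \<in> carrier_mat d d" and q: "\<And>v. v \<in> carrier_vec d \<Longrightarrow> (A *\<^sub>v v) \<bullet>c v \<in> \<real>"
    using assms unfolding psd_def by auto
  have "A$$(i,j) = cnj (A$$(j,i))" if i: "i < d" and j: "j < d" for i j
  proof -
    have rii: "A$$(i,i) \<in> \<real>" using q[of "unit_vec d i"] B_unit[OF A i i] by auto
    have rjj: "A$$(j,j) \<in> \<real>" using q[of "unit_vec d j"] B_unit[OF A j j] by auto
    have r1: "A$$(i,i) + cnj 1 * A$$(j,i) + 1 * A$$(i,j) + 1 * cnj 1 * A$$(j,j) \<in> \<real>"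
      using q[of "unit_vec d i + 1 \<cdot>\<^sub>v unit_vec d j"] qf_two[OF A i j, of 1] by auto
    have r2: "A$$(i,i) + cnj \<i> * A$$(j,i) + \<i> * A$$(i,j) + \<i> * cnj \<i> * A$$(j,j) \<in> \<real>"
      using q[of "unit_vec d i + \<i> \<cdot>\<^sub>v unit_vec d j"] qf_two[OF A i j, of \<i>] by auto
    have "Im (A$$(i,i)) = 0" "Im (A$$(j,j)) = 0" using rii rjj by (auto simp: complex_is_Real_iff)
    moreover have "Im (A$$(i,i) + cnj 1 * A$$(j,i) + 1 * A$$(i,j) + 1 * cnj 1 * A$$(j,j)) = 0"
      using r1 by (simp only: complex_is_Real_iff)
    moreover have "Im (A$$(i,i) + cnj \<i> * A$$(j,i) + \<i> * A$$(i,j) + \<i> * cnj \<i> * A$$(j,j)) = 0"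
      using r2 by (simp only: complex_is_Real_iff)
    ultimately show ?thesis by (intro complex_eqI) auto
  qed
  thus ?thesis using A unfolding herm_def by blast
qed


lemma disc: fixes a b g :: real
  assumes h: "\<And>t. 0 \<le> b - 2*t*a + t^2*g" and g: "0 \<le> g"
  shows "a^2 \<le> b*g"
proof (cases "g = 0")
  case True
  have "a = 0"
  proof (rule ccontr)
    assume a: "a \<noteq> 0"
    have "0 \<le> b - 2*((b+1)/(2*a))*a" using h[of "(b+1)/(2*a)"] True by simp
    also have "\<dots> = -1" using a by (simp add: field_simps)
    finally show False by simp
  qed
  thus ?thesis using True by simp
next
  case False
  hence gp: "g > 0" using g by simp
  have "0 \<le> b - 2*(a/g)*a + (a/g)^2*g" using h[of "a/g"] .
  also have "\<dots> = b - a^2/g" using gp by (simp add: field_simps power2_eq_square)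
  finally have "a^2/g \<le> b" by simp
  thus ?thesis using gp by (simp add: field_simps mult.commute)
qed

lemma psd_re: "psd d A \<Longrightarrow> v \<in> carrier_vec d \<Longrightarrow> 0 \<le> Re ((A *\<^sub>v v) \<bullet>c v)"
  unfolding psd_def by auto

lemma psd_real: "psd d A \<Longrightarrow> v \<in> carrier_vec d \<Longrightarrow> (A *\<^sub>v v) \<bullet>c v = complex_of_real (Re ((A *\<^sub>v v) \<bullet>c v))"
  unfolding psd_def by (auto simp: complex_is_Real_iff complex_eq_iff)

lemma cs: assumes p: "psd d A" and a: "a \<in> carrier_vec d" and b: "b \<in> carrier_vec d"
  and al: "(A *\<^sub>v b) \<bullet>c a = complex_of_real al"
  shows "al^2 \<le> Re ((A *\<^sub>v b) \<bullet>c b) * Re ((A *\<^sub>v a) \<bullet>c a)"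
proof (rule disc)
  have A: "A \<in> carrier_mat d d" using p unfolding psd_def by auto
  have h: "herm d A" by (rule psd_herm[OF p])
  have Aa: "A *\<^sub>v a \<in> carrier_vec d" and Ab: "A *\<^sub>v b \<in> carrier_vec d" using A a b by auto
  have ba: "(A *\<^sub>v a) \<bullet>c b = complex_of_real al"
  proof -
    have "(A *\<^sub>v a) \<bullet>c b = a \<bullet>c (A *\<^sub>v b)" by (rule herm_swap[OF h a b])
    also have "\<dots> = cnj ((A *\<^sub>v b) \<bullet>c a)" using cip_cnj[OF Ab a] by simp
    finally show ?thesis using al by simp
  qed
  fix t :: real
  let ?t = "complex_of_real t"
  have ta: "?t \<cdot>\<^sub>v a \<in> carrier_vec d" "?t \<cdot>\<^sub>v (A *\<^sub>v a) \<in> carrier_vec d" using a Aa by auto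
  have m: "A *\<^sub>v (b - ?t \<cdot>\<^sub>v a) = A *\<^sub>v b - ?t \<cdot>\<^sub>v (A *\<^sub>v a)"
    by (simp add: mult_minus_distrib_mat_vec[OF A b ta(1)] mult_mat_vec[OF A a])
  have "(A *\<^sub>v (b - ?t \<cdot>\<^sub>v a)) \<bullet>c (b - ?t \<cdot>\<^sub>v a) =
     (A *\<^sub>v b) \<bullet>c b - (A *\<^sub>v b) \<bullet>c (?t \<cdot>\<^sub>v a) - ((?t \<cdot>\<^sub>v (A *\<^sub>v a)) \<bullet>c b - (?t \<cdot>\<^sub>v (A *\<^sub>v a)) \<bullet>c (?t \<cdot>\<^sub>v a))"
    unfolding m cip_minus_left[OF Ab ta(2) minus_carrier_vec[OF b ta(1)]]
      cip_minus_right[OF Ab b ta(1)] cip_minus_right[OF ta(2) b ta(1)] ..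
  also have "\<dots> = (A *\<^sub>v b) \<bullet>c b - ?t * complex_of_real al - (?t * complex_of_real al - ?t * ?t * ((A *\<^sub>v a) \<bullet>c a))"
    using Aa Ab a b al ba by (simp add: cip_smult_right[of _ d] cip_smult_left[of _ d] mult_ac)
  finally have e: "Re ((A *\<^sub>v (b - ?t \<cdot>\<^sub>v a)) \<bullet>c (b - ?t \<cdot>\<^sub>v a)) =
     Re ((A *\<^sub>v b) \<bullet>c b) - 2 * t * al + t^2 * Re ((A *\<^sub>v a) \<bullet>c a)"
    by (simp add: power2_eq_square)
  show "0 \<le> Re ((A *\<^sub>v b) \<bullet>c b) - 2 * t * al + t^2 * Re ((A *\<^sub>v a) \<bullet>c a)"
    unfolding e[symmetric] by (rule psd_re[OF p]) (use b ta in auto)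
next
  show "0 \<le> Re ((A *\<^sub>v a) \<bullet>c a)" by (rule psd_re[OF p a])
qed

lemma psd_ker: assumes p: "psd d A" and v: "v \<in> carrier_vec d" and z: "Re ((A *\<^sub>v v) \<bullet>c v) = 0"
  shows "A *\<^sub>v v = 0\<^sub>v d"
proof -
  have A: "A \<in> carrier_mat d d" using p unfolding psd_def by auto
  have Av: "A *\<^sub>v v \<in> carrier_vec d" using A v by auto
  define al where "al = (\<Sum>i<d. (cmod ((A *\<^sub>v v)$i))^2)"
  have "(A *\<^sub>v v) \<bullet>c (A *\<^sub>v v) = complex_of_real al" unfolding al_def by (rule cip_self[OF Av])
  from cs[OF p Av v this] z have "al^2 \<le> 0" by simp
  hence "al = 0" by simp
  hence "(A *\<^sub>v v) \<bullet>c (A *\<^sub>v v) = 0" using cip_self[OF Av] unfolding al_def by simp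
  thus ?thesis by (rule cip_self_zero[OF Av])
qed

lemma coord_le: assumes u: "(u::complex vec) \<in> carrier_vec d" and j: "j < d"
  shows "cmod (u$j) \<le> sqrt (Re (u \<bullet>c u))"
proof -
  have "(cmod (u$j))^2 \<le> (\<Sum>i<d. (cmod (u$i))^2)"
    by (rule member_le_sum) (use j in auto)
  hence "(cmod (u$j))^2 \<le> Re (u \<bullet>c u)" using cip_self_re[OF u] by simp
  thus ?thesis using real_le_rsqrt by blast
qed

lemma bound_mv: assumes A: "(A::complex mat) \<in> carrier_mat d d"
  shows "\<exists>C\<ge>0. \<forall>u\<in>carrier_vec d. Re ((A *\<^sub>v u) \<bullet>c (A *\<^sub>v u)) \<le> C * Re (u \<bullet>c u)
     \<and> Re ((A *\<^sub>v u) \<bullet>c u) \<le> C * Re (u \<bullet>c u)"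
proof -
  define S where "S = (\<Sum>i<d. \<Sum>j<d. cmod (A$$(i,j)))"
  have S0: "0 \<le> S" unfolding S_def by (intro sum_nonneg) auto
  define C where "C = real d * S^2 + real d * S"
  have "Re ((A *\<^sub>v u) \<bullet>c (A *\<^sub>v u)) \<le> C * Re (u \<bullet>c u) \<and> Re ((A *\<^sub>v u) \<bullet>c u) \<le> C * Re (u \<bullet>c u)"
    if u: "u \<in> carrier_vec d" for u
  proof -
    define N where "N = Re (u \<bullet>c u)"
    have N0: "0 \<le> N" unfolding N_def using cip_self_re[OF u] by (auto intro: sum_nonneg)
    have sN: "sqrt N * sqrt N = N" using N0 by simp
    have cu: "\<And>i. i<d \<Longrightarrow> cmod (u$i) \<le> sqrt N" using coord_le[OF u] unfolding N_def by blast
    have Au: "A *\<^sub>v u \<in> carrier_vec d" using A u by auto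
    have ci: "cmod ((A *\<^sub>v u)$i) \<le> S * sqrt N" if i: "i < d" for i
    proof -
      have "cmod ((A *\<^sub>v u)$i) = cmod (\<Sum>j<d. A$$(i,j) * u$j)" using mv_idx[OF A u i] by simp
      also have "\<dots> \<le> (\<Sum>j<d. cmod (A$$(i,j) * u$j))" by (rule norm_sum)
      also have "\<dots> \<le> (\<Sum>j<d. cmod (A$$(i,j)) * sqrt N)"
        by (intro sum_mono) (auto simp: norm_mult intro!: mult_left_mono cu)
      also have "\<dots> = (\<Sum>j<d. cmod (A$$(i,j))) * sqrt N" by (simp add: sum_distrib_right)
      also have "\<dots> \<le> S * sqrt N" unfolding S_def
        by (intro mult_right_mono member_le_sum[of i]) (use N0 i in \<open>auto intro: sum_nonneg\<close>)
      finally show ?thesis .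
    qed
    have "Re ((A *\<^sub>v u) \<bullet>c (A *\<^sub>v u)) = (\<Sum>i<d. (cmod ((A *\<^sub>v u)$i))^2)" by (rule cip_self_re[OF Au])
    also have "\<dots> \<le> (\<Sum>i<d. (S * sqrt N)^2)" by (intro sum_mono power_mono ci) auto
    also have "\<dots> = real d * S^2 * N" using N0 by (simp add: power_mult_distrib)
    also have "\<dots> \<le> C * N" unfolding C_def using S0 N0 by (simp add: distrib_right)
    finally have 1: "Re ((A *\<^sub>v u) \<bullet>c (A *\<^sub>v u)) \<le> C * N" .
    have "Re ((A *\<^sub>v u) \<bullet>c u) \<le> cmod ((A *\<^sub>v u) \<bullet>c u)" by (rule complex_Re_le_cmod)
    also have "(A *\<^sub>v u) \<bullet>c u = (\<Sum>i<d. (A *\<^sub>v u)$i * cnj (u$i))" by (rule cip_sum[OF Au u])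
    also have "cmod \<dots> \<le> (\<Sum>i<d. cmod ((A *\<^sub>v u)$i * cnj (u$i)))" by (rule norm_sum)
    also have "\<dots> \<le> (\<Sum>i<d. (S * sqrt N) * sqrt N)"
      by (intro sum_mono) (use N0 S0 in \<open>auto simp: norm_mult intro!: mult_mono ci cu mult_nonneg_nonneg\<close>)
    also have "\<dots> = real d * S * N" using sN by (simp add: mult.assoc)
    also have "\<dots> \<le> C * N" unfolding C_def using S0 N0 by (simp add: distrib_right)
    finally have 2: "Re ((A *\<^sub>v u) \<bullet>c u) \<le> C * N" by (simp only: cip_sum[OF Au u])
    show ?thesis using 1 2 unfolding N_def by simp
  qed
  moreover have "0 \<le> C" unfolding C_def using S0 by simp
  ultimately show ?thesis by blast
qed

lemma cip_zero_right: "(u::complex vec) \<in> carrier_vec d \<Longrightarrow> u \<bullet>c 0\<^sub>v d = 0"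
  by (simp add: cip_sum)

lemma qf_comb: assumes A: "(A::complex mat) \<in> carrier_mat d d" and B: "B \<in> carrier_mat d d"
  and v: "v \<in> carrier_vec d"
  shows "((c \<cdot>\<^sub>m A - B) *\<^sub>v v) \<bullet>c v = c * ((A *\<^sub>v v) \<bullet>c v) - (B *\<^sub>v v) \<bullet>c v"
proof -
  have e: "(c \<cdot>\<^sub>m A - B) *\<^sub>v v = c \<cdot>\<^sub>v (A *\<^sub>v v) - B *\<^sub>v v"
  proof (rule eq_vecI)
    fix i assume "i < dim_vec (c \<cdot>\<^sub>v (A *\<^sub>v v) - B *\<^sub>v v)"
    hence i: "i < d" using B by auto
    have CB: "c \<cdot>\<^sub>m A - B \<in> carrier_mat d d" using A B by auto
    have "((c \<cdot>\<^sub>m A - B) *\<^sub>v v) $ i = (\<Sum>j<d. (c \<cdot>\<^sub>m A - B)$$(i,j) * v$j)" by (rule mv_idx[OF CB v i])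
    also have "\<dots> = (\<Sum>j<d. c * (A$$(i,j) * v$j) - B$$(i,j) * v$j)"
      by (intro sum.cong refl) (use A B i in \<open>auto simp: ring_distribs\<close>)
    also have "\<dots> = c * (A *\<^sub>v v)$i - (B *\<^sub>v v)$i"
      by (simp add: mv_idx[OF A v i] mv_idx[OF B v i] sum_subtractf sum_distrib_left)
    finally show "((c \<cdot>\<^sub>m A - B) *\<^sub>v v) $ i = (c \<cdot>\<^sub>v (A *\<^sub>v v) - B *\<^sub>v v) $ i" using i A B by simp
  qed (use A B in auto)
  show ?thesis unfolding e using A B v
    by (simp add: cip_minus_left[of _ d] cip_smult_left[of _ d])
qed

lemma op_le_iff: assumes r: "psd d \<rho>" and s: "psd d \<sigma>"
  shows "op_le d \<rho> (complex_of_real m \<cdot>\<^sub>m \<sigma>) \<longleftrightarrow>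
     (\<forall>v\<in>carrier_vec d. Re ((\<rho> *\<^sub>v v) \<bullet>c v) \<le> m * Re ((\<sigma> *\<^sub>v v) \<bullet>c v))"
proof -
  have R: "\<rho> \<in> carrier_mat d d" and S: "\<sigma> \<in> carrier_mat d d" using r s unfolding psd_def by auto
  have q: "((complex_of_real m \<cdot>\<^sub>m \<sigma> - \<rho>) *\<^sub>v v) \<bullet>c v
     = complex_of_real (m * Re ((\<sigma> *\<^sub>v v) \<bullet>c v) - Re ((\<rho> *\<^sub>v v) \<bullet>c v))" if v: "v \<in> carrier_vec d" for v
    unfolding qf_comb[OF S R v] by (subst psd_real[OF r v], subst psd_real[OF s v]) simp
  show ?thesis unfolding op_le_def psd_def using R S q by auto
qed

lemma supp_sub: assumes r: "psd d \<rho>" and s: "psd d \<sigma>"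
  and le: "op_le d \<rho> (complex_of_real m \<cdot>\<^sub>m \<sigma>)"
  shows "supp_op d \<rho> \<subseteq> supp_op d \<sigma>"
proof
  fix y assume "y \<in> supp_op d \<rho>"
  then obtain v where v: "v \<in> carrier_vec d" and y: "y = \<rho> *\<^sub>v v" unfolding supp_op_def by auto
  have R: "\<rho> \<in> carrier_mat d d" and S: "\<sigma> \<in> carrier_mat d d" using r s unfolding psd_def by auto
  have hr: "herm d \<rho>" and hs: "herm d \<sigma>" using psd_herm r s by auto
  have yc: "y \<in> carrier_vec d" using y R v by auto
  obtain x where x: "x \<in> carrier_vec d" and sk: "\<sigma> *\<^sub>v (y - \<sigma> *\<^sub>v x) = 0\<^sub>v d"
    using proj[OF hs yc] by auto
  define k where "k = y - \<sigma> *\<^sub>v x"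
  have k: "k \<in> carrier_vec d" unfolding k_def using yc x S by auto
  have sk': "\<sigma> *\<^sub>v k = 0\<^sub>v d" using sk unfolding k_def .
  have "Re ((\<rho> *\<^sub>v k) \<bullet>c k) \<le> m * Re ((\<sigma> *\<^sub>v k) \<bullet>c k)" using le k unfolding op_le_iff[OF r s] by auto
  also have "(\<sigma> *\<^sub>v k) \<bullet>c k = 0" unfolding sk' using k by (simp add: cip_sum[of _ d])
  finally have "Re ((\<rho> *\<^sub>v k) \<bullet>c k) = 0" using psd_re[OF r k] by simp
  hence rk: "\<rho> *\<^sub>v k = 0\<^sub>v d" by (rule psd_ker[OF r k])
  have Sx: "\<sigma> *\<^sub>v x \<in> carrier_vec d" using S x by auto
  have "k \<bullet>c k = y \<bullet>c k - (\<sigma> *\<^sub>v x) \<bullet>c k" using cip_minus_left[OF yc Sx k] by (simp only: k_def[symmetric])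
  also have "y \<bullet>c k = v \<bullet>c (\<rho> *\<^sub>v k)" unfolding y by (rule herm_swap[OF hr v k])
  also have "(\<sigma> *\<^sub>v x) \<bullet>c k = x \<bullet>c (\<sigma> *\<^sub>v k)" by (rule herm_swap[OF hs x k])
  finally have "k \<bullet>c k = 0" unfolding rk sk' using v x by (simp add: cip_zero_right)
  hence "k = 0\<^sub>v d" by (rule cip_self_zero[OF k])
  hence "y = \<sigma> *\<^sub>v x" using vec_eq_from_minus[OF yc Sx] unfolding k_def by auto
  thus "y \<in> supp_op d \<sigma>" unfolding supp_op_def using x by auto
qed


lemma ginv_exists: assumes s: "psd d \<sigma>"
  shows "\<exists>G\<in>carrier_mat d d. \<forall>u\<in>carrier_vec d. \<sigma> *\<^sub>v (\<sigma> *\<^sub>v (G *\<^sub>v u)) = \<sigma> *\<^sub>v u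
      \<and> \<sigma> *\<^sub>v (G *\<^sub>v (\<sigma> *\<^sub>v u)) = \<sigma> *\<^sub>v u"
proof -
  have S: "\<sigma> \<in> carrier_mat d d" using s unfolding psd_def by auto
  have hs: "herm d \<sigma>" using psd_herm s by auto
  define g where "g = (\<lambda>j. SOME x. x \<in> carrier_vec d \<and> \<sigma> *\<^sub>v (unit_vec d j - \<sigma> *\<^sub>v x) = 0\<^sub>v d)"
  have g: "g j \<in> carrier_vec d \<and> \<sigma> *\<^sub>v (unit_vec d j - \<sigma> *\<^sub>v g j) = 0\<^sub>v d" for j
    unfolding g_def by (rule someI_ex) (use proj[OF hs, of "unit_vec d j"] in auto)
  have gj: "\<sigma> *\<^sub>v (\<sigma> *\<^sub>v g j) = \<sigma> *\<^sub>v unit_vec d j" for j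
  proof -
    have "\<sigma> *\<^sub>v unit_vec d j - \<sigma> *\<^sub>v (\<sigma> *\<^sub>v g j) = 0\<^sub>v d"
      using g[of j] S mult_minus_distrib_mat_vec[OF S, of "unit_vec d j" "\<sigma> *\<^sub>v g j"] by auto
    from vec_eq_from_minus[OF _ _ this] S g[of j] show ?thesis by auto
  qed
  define G where "G = mat d d (\<lambda>(i,j). g j $ i)"
  have G: "G \<in> carrier_mat d d" unfolding G_def by auto
  have colG: "j < d \<Longrightarrow> col G j = g j" for j
    unfolding G_def using g[of j] by (intro eq_vecI) auto
  have M: "\<sigma> * \<sigma> * G = \<sigma>"
  proof (rule eq_matI)
    fix i j assume i: "i < dim_row \<sigma>" and j: "j < dim_col \<sigma>"
    have ij: "i < d" "j < d" using i j S by auto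
    have SS: "\<sigma> * \<sigma> \<in> carrier_mat d d" using S by auto
    have "col (\<sigma> * \<sigma> * G) j = (\<sigma> * \<sigma>) *\<^sub>v col G j" by (rule col_mult2[OF SS G ij(2)])
    also have "\<dots> = \<sigma> *\<^sub>v (\<sigma> *\<^sub>v g j)" using colG[OF ij(2)] S g[of j] by simp
    also have "\<dots> = col \<sigma> j" using gj mv_unit[OF S ij(2)] by simp
    finally have "col (\<sigma> * \<sigma> * G) j $ i = col \<sigma> j $ i" by simp
    thus "(\<sigma> * \<sigma> * G) $$ (i, j) = \<sigma> $$ (i, j)" using ij S G by simp
  qed (use S G in auto)
  have P1: "\<sigma> *\<^sub>v (\<sigma> *\<^sub>v (G *\<^sub>v u)) = \<sigma> *\<^sub>v u" if u: "u \<in> carrier_vec d" for u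
  proof -
    have SS: "\<sigma> * \<sigma> \<in> carrier_mat d d" using S by auto
    have Gu: "G *\<^sub>v u \<in> carrier_vec d" using G u by auto
    have "(\<sigma> * \<sigma> * G) *\<^sub>v u = (\<sigma> * \<sigma>) *\<^sub>v (G *\<^sub>v u)" by (rule assoc_mult_mat_vec[OF SS G u])
    also have "\<dots> = \<sigma> *\<^sub>v (\<sigma> *\<^sub>v (G *\<^sub>v u))" by (rule assoc_mult_mat_vec[OF S S Gu])
    finally have "\<sigma> *\<^sub>v (\<sigma> *\<^sub>v (G *\<^sub>v u)) = (\<sigma> * \<sigma> * G) *\<^sub>v u" ..
    thus ?thesis unfolding M .
  qed
  have P2: "\<sigma> *\<^sub>v (G *\<^sub>v (\<sigma> *\<^sub>v u)) = \<sigma> *\<^sub>v u" if u: "u \<in> carrier_vec d" for u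
  proof -
    have Su: "\<sigma> *\<^sub>v u \<in> carrier_vec d" using S u by auto
    define z where "z = G *\<^sub>v (\<sigma> *\<^sub>v u) - u"
    have z: "z \<in> carrier_vec d" unfolding z_def using G S u by auto
    define w where "w = \<sigma> *\<^sub>v z"
    have w: "w \<in> carrier_vec d" unfolding w_def using S z by auto
    have w': "w = \<sigma> *\<^sub>v (G *\<^sub>v (\<sigma> *\<^sub>v u)) - \<sigma> *\<^sub>v u"
      unfolding w_def z_def using S G u by (simp add: mult_minus_distrib_mat_vec[OF S])
    have "\<sigma> *\<^sub>v w = \<sigma> *\<^sub>v (\<sigma> *\<^sub>v (G *\<^sub>v (\<sigma> *\<^sub>v u))) - \<sigma> *\<^sub>v (\<sigma> *\<^sub>v u)"
      unfolding w' using S G u by (simp add: mult_minus_distrib_mat_vec[OF S])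
    also have "\<dots> = 0\<^sub>v d" unfolding P1[OF Su] using S u by simp
    finally have sw: "\<sigma> *\<^sub>v w = 0\<^sub>v d" .
    have "w \<bullet>c w = z \<bullet>c (\<sigma> *\<^sub>v w)" unfolding w_def by (rule herm_swap[OF hs z w[unfolded w_def]])
    also have "\<dots> = 0" unfolding sw using z by (simp add: cip_zero_right)
    finally have "w = 0\<^sub>v d" using cip_self_zero[OF w] by simp
    moreover have "\<sigma> *\<^sub>v (G *\<^sub>v (\<sigma> *\<^sub>v u)) \<in> carrier_vec d" using S G u by auto
    ultimately show ?thesis unfolding w' using vec_eq_from_minus[OF _ Su] by blast
  qed
  show ?thesis using G P1 P2 by blast
qed


lemma exists_mu: assumes r: "psd d \<rho>" and s: "psd d \<sigma>"
  and sub: "supp_op d \<rho> \<subseteq> supp_op d \<sigma>"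
  shows "\<exists>m. op_le d \<rho> (complex_of_real m \<cdot>\<^sub>m \<sigma>)"
proof -
  have R: "\<rho> \<in> carrier_mat d d" and S: "\<sigma> \<in> carrier_mat d d" using r s unfolding psd_def by auto
  have hr: "herm d \<rho>" and hs: "herm d \<sigma>" using psd_herm r s by auto
  obtain G where G: "G \<in> carrier_mat d d"
    and P1: "\<And>u. u \<in> carrier_vec d \<Longrightarrow> \<sigma> *\<^sub>v (\<sigma> *\<^sub>v (G *\<^sub>v u)) = \<sigma> *\<^sub>v u"
    and P2: "\<And>u. u \<in> carrier_vec d \<Longrightarrow> \<sigma> *\<^sub>v (G *\<^sub>v (\<sigma> *\<^sub>v u)) = \<sigma> *\<^sub>v u"
    using ginv_exists[OF s] by blast
  obtain CG where CG: "0 \<le> CG" "\<And>u. u \<in> carrier_vec d \<Longrightarrow> Re ((G *\<^sub>v u) \<bullet>c (G *\<^sub>v u)) \<le> CG * Re (u \<bullet>c u)"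
    using bound_mv[OF G] by blast
  obtain CS where CS: "0 \<le> CS" "\<And>u. u \<in> carrier_vec d \<Longrightarrow> Re ((\<sigma> *\<^sub>v u) \<bullet>c u) \<le> CS * Re (u \<bullet>c u)"
    using bound_mv[OF S] by blast
  obtain CR where CR: "0 \<le> CR" "\<And>u. u \<in> carrier_vec d \<Longrightarrow> Re ((\<rho> *\<^sub>v u) \<bullet>c u) \<le> CR * Re (u \<bullet>c u)"
    using bound_mv[OF R] by blast
  have kerr: "\<rho> *\<^sub>v k = 0\<^sub>v d" if k: "k \<in> carrier_vec d" and sk: "\<sigma> *\<^sub>v k = 0\<^sub>v d" for k
  proof -
    have Rk: "\<rho> *\<^sub>v k \<in> carrier_vec d" using R k by auto
    have "\<rho> *\<^sub>v (\<rho> *\<^sub>v k) \<in> supp_op d \<rho>" unfolding supp_op_def using Rk by auto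
    with sub obtain x where x: "x \<in> carrier_vec d" and e: "\<rho> *\<^sub>v (\<rho> *\<^sub>v k) = \<sigma> *\<^sub>v x"
      unfolding supp_op_def by auto
    have "(\<rho> *\<^sub>v k) \<bullet>c (\<rho> *\<^sub>v k) = k \<bullet>c (\<rho> *\<^sub>v (\<rho> *\<^sub>v k))" by (rule herm_swap[OF hr k Rk])
    also have "\<dots> = k \<bullet>c (\<sigma> *\<^sub>v x)" unfolding e ..
    also have "\<dots> = cnj ((\<sigma> *\<^sub>v x) \<bullet>c k)" using cip_cnj[of "\<sigma> *\<^sub>v x" d k] S x k by simp
    also have "(\<sigma> *\<^sub>v x) \<bullet>c k = x \<bullet>c (\<sigma> *\<^sub>v k)" by (rule herm_swap[OF hs x k])
    also have "\<dots> = 0" unfolding sk using x by (simp add: cip_zero_right)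
    finally show ?thesis using cip_self_zero[OF Rk] by simp
  qed
  define m where "m = CR * (CS * CG)"
  have main: "Re ((\<rho> *\<^sub>v v) \<bullet>c v) \<le> m * Re ((\<sigma> *\<^sub>v v) \<bullet>c v)" if v: "v \<in> carrier_vec d" for v
  proof -
    have Gv: "G *\<^sub>v v \<in> carrier_vec d" using G v by auto
    define a where "a = \<sigma> *\<^sub>v (G *\<^sub>v v)"
    have a: "a \<in> carrier_vec d" unfolding a_def using S G v by auto
    define b where "b = G *\<^sub>v a"
    have b: "b \<in> carrier_vec d" unfolding b_def using G a by auto
    have sb: "\<sigma> *\<^sub>v b = a" unfolding b_def a_def using P2[OF Gv] .
    define k where "k = v - a"
    have k: "k \<in> carrier_vec d" unfolding k_def using v a by auto
    have sk: "\<sigma> *\<^sub>v k = 0\<^sub>v d"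
      unfolding k_def a_def using P1[OF v] S v Gv by (simp add: mult_minus_distrib_mat_vec[OF S])
    have rk: "\<rho> *\<^sub>v k = 0\<^sub>v d" by (rule kerr[OF k sk])
    have Ra: "\<rho> *\<^sub>v a \<in> carrier_vec d" and Sa: "\<sigma> *\<^sub>v a \<in> carrier_vec d" using R S a by auto
    have qv: "(M *\<^sub>v v) \<bullet>c v = (M *\<^sub>v a) \<bullet>c a" if hM: "herm d M" and Mk: "M *\<^sub>v k = 0\<^sub>v d" for M
    proof -
      have M: "M \<in> carrier_mat d d" using hM unfolding herm_def by blast
      have Ma: "M *\<^sub>v a \<in> carrier_vec d" using M a by auto
      have "M *\<^sub>v v - M *\<^sub>v a = 0\<^sub>v d" using Mk unfolding k_def using mult_minus_distrib_mat_vec[OF M v a] by simp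
      hence Mv: "M *\<^sub>v v = M *\<^sub>v a" using vec_eq_from_minus[OF _ Ma] M v by auto
      have "(M *\<^sub>v a) \<bullet>c v - (M *\<^sub>v a) \<bullet>c a = (M *\<^sub>v a) \<bullet>c k"
        unfolding k_def using cip_minus_right[OF Ma v a] by simp
      also have "\<dots> = a \<bullet>c (M *\<^sub>v k)" by (rule herm_swap[OF hM a k])
      also have "\<dots> = 0" unfolding Mk using a by (simp add: cip_zero_right)
      finally show ?thesis unfolding Mv by simp
    qed
    have qr: "(\<rho> *\<^sub>v v) \<bullet>c v = (\<rho> *\<^sub>v a) \<bullet>c a" by (rule qv[OF hr rk])
    have qs: "(\<sigma> *\<^sub>v v) \<bullet>c v = (\<sigma> *\<^sub>v a) \<bullet>c a" by (rule qv[OF hs sk])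
    define al where "al = (\<Sum>i<d. (cmod (a$i))^2)"
    have aa: "(\<sigma> *\<^sub>v b) \<bullet>c a = complex_of_real al" unfolding sb al_def by (rule cip_self[OF a])
    have al: "Re (a \<bullet>c a) = al" unfolding al_def by (rule cip_self_re[OF a])
    have al0: "0 \<le> al" unfolding al_def by (auto intro: sum_nonneg)
    define qa where "qa = Re ((\<sigma> *\<^sub>v a) \<bullet>c a)"
    have qa0: "0 \<le> qa" unfolding qa_def by (rule psd_re[OF s a])
    have "al^2 \<le> Re ((\<sigma> *\<^sub>v b) \<bullet>c b) * qa" unfolding qa_def by (rule cs[OF s a b aa])
    also have "Re ((\<sigma> *\<^sub>v b) \<bullet>c b) \<le> CS * (CG * al)"
    proof -
      have "Re ((\<sigma> *\<^sub>v b) \<bullet>c b) \<le> CS * Re (b \<bullet>c b)" by (rule CS(2)[OF b])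
      also have "Re (b \<bullet>c b) \<le> CG * al" unfolding b_def using CG(2)[OF a] al by simp
      finally show ?thesis using CS(1) by (simp add: mult_left_mono)
    qed
    hence "Re ((\<sigma> *\<^sub>v b) \<bullet>c b) * qa \<le> CS * (CG * al) * qa" using qa0 by (rule mult_right_mono)
    finally have "al * al \<le> al * (CS * CG * qa)" by (simp add: power2_eq_square mult_ac)
    hence alb: "al \<le> CS * CG * qa"
    proof (cases "al = 0")
      case True thus ?thesis using CS(1) CG(1) qa0 by simp
    next
      case False thus ?thesis using al0 \<open>al * al \<le> al * (CS * CG * qa)\<close> by simp
    qed
    have "Re ((\<rho> *\<^sub>v v) \<bullet>c v) = Re ((\<rho> *\<^sub>v a) \<bullet>c a)" using qr by simp
    also have "\<dots> \<le> CR * al" using CR(2)[OF a] al by simp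
    also have "\<dots> \<le> CR * (CS * CG * qa)" using alb CR(1) by (rule mult_left_mono)
    also have "\<dots> = m * Re ((\<sigma> *\<^sub>v v) \<bullet>c v)" unfolding m_def qa_def qs by (simp add: mult_ac)
    finally show ?thesis .
  qed
  show ?thesis using main op_le_iff[OF r s, of m] by blast
qed


lemma op_le_mono: assumes r: "psd d \<rho>" and s: "psd d \<sigma>"
  and le: "op_le d \<rho> (complex_of_real m \<cdot>\<^sub>m \<sigma>)" and mm: "m \<le> m'"
  shows "op_le d \<rho> (complex_of_real m' \<cdot>\<^sub>m \<sigma>)"
proof -
  have "Re ((\<rho> *\<^sub>v v) \<bullet>c v) \<le> m' * Re ((\<sigma> *\<^sub>v v) \<bullet>c v)" if v: "v \<in> carrier_vec d" for v
  proof -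
    have "Re ((\<rho> *\<^sub>v v) \<bullet>c v) \<le> m * Re ((\<sigma> *\<^sub>v v) \<bullet>c v)" using le v unfolding op_le_iff[OF r s] by blast
    also have "\<dots> \<le> m' * Re ((\<sigma> *\<^sub>v v) \<bullet>c v)" using mm psd_re[OF s v] by (rule mult_right_mono)
    finally show ?thesis .
  qed
  thus ?thesis unfolding op_le_iff[OF r s] by blast
qed

lemma op_le_closed: assumes r: "psd d \<rho>" and s: "psd d \<sigma>"
  and le: "\<And>m'. m < m' \<Longrightarrow> op_le d \<rho> (complex_of_real m' \<cdot>\<^sub>m \<sigma>)"
  shows "op_le d \<rho> (complex_of_real m \<cdot>\<^sub>m \<sigma>)"
proof -
  have "Re ((\<rho> *\<^sub>v v) \<bullet>c v) \<le> m * Re ((\<sigma> *\<^sub>v v) \<bullet>c v)" if v: "v \<in> carrier_vec d" for v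
  proof -
    define a where "a = Re ((\<rho> *\<^sub>v v) \<bullet>c v)"
    define b where "b = Re ((\<sigma> *\<^sub>v v) \<bullet>c v)"
    have b0: "0 \<le> b" unfolding b_def by (rule psd_re[OF s v])
    have h: "a \<le> m' * b" if "m < m'" for m'
      using le[OF that] v unfolding op_le_iff[OF r s] a_def b_def by blast
    show ?thesis
    proof (cases "b = 0")
      case True thus ?thesis using h[of "m+1"] unfolding a_def[symmetric] b_def[symmetric] by simp
    next
      case False
      hence bp: "0 < b" using b0 by simp
      have "a / b \<le> m"
      proof (rule dense_ge)
        fix y assume "m < y" thus "a / b \<le> y" using h[of y] bp by (simp add: divide_le_eq)
      qed
      thus ?thesis using bp unfolding a_def[symmetric] b_def[symmetric] by (simp add: divide_le_eq mult.commute)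
    qed
  qed
  thus ?thesis unfolding op_le_iff[OF r s] by blast
qed

lemma op_le_ge1: assumes r: "psd d \<rho>" and s: "psd d \<sigma>" and tr: "mtrace \<rho> = 1" and ts: "mtrace \<sigma> = 1"
  and le: "op_le d \<rho> (complex_of_real m \<cdot>\<^sub>m \<sigma>)"
  shows "1 \<le> m"
proof -
  have R: "\<rho> \<in> carrier_mat d d" and S: "\<sigma> \<in> carrier_mat d d" using r s unfolding psd_def by auto
  have h: "Re (\<rho>$$(i,i)) \<le> m * Re (\<sigma>$$(i,i))" if i: "i < d" for i
    using le unfolding op_le_iff[OF r s] using B_unit[OF R i i] B_unit[OF S i i]
    by (metis unit_vec_carrier)
  have "Re (mtrace \<rho>) = (\<Sum>i<d. Re (\<rho>$$(i,i)))" using R unfolding mtrace_def by simp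
  also have "\<dots> \<le> (\<Sum>i<d. m * Re (\<sigma>$$(i,i)))" by (intro sum_mono h) auto
  also have "\<dots> = m * Re (mtrace \<sigma>)" using S unfolding mtrace_def by (simp add: sum_distrib_left)
  finally show ?thesis using tr ts by simp
qed

lemma inf_mem: assumes r: "psd d \<rho>" and s: "psd d \<sigma>" and tr: "mtrace \<rho> = 1" and ts: "mtrace \<sigma> = 1"
  and ne: "\<exists>m. op_le d \<rho> (complex_of_real m \<cdot>\<^sub>m \<sigma>)"
  shows "op_le d \<rho> (complex_of_real (Inf {m. op_le d \<rho> (complex_of_real m \<cdot>\<^sub>m \<sigma>)}) \<cdot>\<^sub>m \<sigma>)"
    and "1 \<le> Inf {m. op_le d \<rho> (complex_of_real m \<cdot>\<^sub>m \<sigma>)}"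
proof -
  let ?S = "{m. op_le d \<rho> (complex_of_real m \<cdot>\<^sub>m \<sigma>)}"
  have ne': "?S \<noteq> {}" using ne by auto
  have bdd: "bdd_below ?S" by (rule bdd_belowI[of _ 1]) (use op_le_ge1[OF r s tr ts] in auto)
  show "op_le d \<rho> (complex_of_real (Inf ?S) \<cdot>\<^sub>m \<sigma>)"
  proof (rule op_le_closed[OF r s])
    fix m' assume "Inf ?S < m'"
    then obtain m where "m \<in> ?S" "m < m'" using cInf_lessD[OF ne'] by blast
    thus "op_le d \<rho> (complex_of_real m' \<cdot>\<^sub>m \<sigma>)" using op_le_mono[OF r s] by auto
  qed
  show "1 \<le> Inf ?S" using ne' op_le_ge1[OF r s tr ts] by (auto intro: cInf_greatest)
qed

lemma mix_carrier: "mixture d \<pi> \<rho> \<in> carrier_mat d d"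
  unfolding mixture_def by auto

lemma mix_qf: assumes R: "\<And>x. \<rho> x \<in> carrier_mat d d" and v: "v \<in> carrier_vec d"
  shows "(mixture d \<pi> \<rho> *\<^sub>v v) \<bullet>c v = (\<Sum>x\<in>UNIV. complex_of_real (\<pi> x) * ((\<rho> x *\<^sub>v v) \<bullet>c v))"
proof -
  let ?M = "mixture d \<pi> \<rho>"
  have M: "?M \<in> carrier_mat d d" by (rule mix_carrier)
  have "(?M *\<^sub>v v) \<bullet>c v = (\<Sum>i<d. (?M *\<^sub>v v)$i * cnj (v$i))" by (rule cip_sum) (use M v in auto)
  also have "\<dots> = (\<Sum>i<d. \<Sum>j<d. \<Sum>x\<in>UNIV. complex_of_real (\<pi> x) * (\<rho> x $$ (i,j) * v$j * cnj (v$i)))"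
  proof (intro sum.cong refl)
    fix i assume i: "i \<in> {..<d}"
    have "(?M *\<^sub>v v)$i = (\<Sum>j<d. ?M$$(i,j) * v$j)" by (rule mv_idx[OF M v]) (use i in auto)
    also have "\<dots> = (\<Sum>j<d. (\<Sum>x\<in>UNIV. complex_of_real (\<pi> x) * \<rho> x $$ (i,j)) * v$j)"
      using i by (intro sum.cong refl) (auto simp: mixture_def)
    finally show "(?M *\<^sub>v v)$i * cnj (v$i) = (\<Sum>j<d. \<Sum>x\<in>UNIV. complex_of_real (\<pi> x) * (\<rho> x $$ (i,j) * v$j * cnj (v$i)))"
      by (simp add: sum_distrib_right sum_distrib_left mult_ac)
  qed
  also have "\<dots> = (\<Sum>i<d. \<Sum>x\<in>UNIV. \<Sum>j<d. complex_of_real (\<pi> x) * (\<rho> x $$ (i,j) * v$j * cnj (v$i)))"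
    by (intro sum.cong refl sum.swap)
  also have "\<dots> = (\<Sum>x\<in>UNIV. \<Sum>i<d. \<Sum>j<d. complex_of_real (\<pi> x) * (\<rho> x $$ (i,j) * v$j * cnj (v$i)))"
    by (rule sum.swap)
  also have "\<dots> = (\<Sum>x\<in>UNIV. complex_of_real (\<pi> x) * ((\<rho> x *\<^sub>v v) \<bullet>c v))"
  proof (intro sum.cong refl)
    fix x
    have Rx: "\<rho> x *\<^sub>v v \<in> carrier_vec d" using R[of x] v by auto
    have "(\<rho> x *\<^sub>v v) \<bullet>c v = (\<Sum>i<d. (\<rho> x *\<^sub>v v)$i * cnj (v$i))" by (rule cip_sum[OF Rx v])
    also have "\<dots> = (\<Sum>i<d. \<Sum>j<d. \<rho> x $$ (i,j) * v$j * cnj (v$i))"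
      by (intro sum.cong refl) (simp add: mv_idx[OF R[of x] v] sum_distrib_right)
    finally show "(\<Sum>i<d. \<Sum>j<d. complex_of_real (\<pi> x) * (\<rho> x $$ (i,j) * v$j * cnj (v$i))) = complex_of_real (\<pi> x) * ((\<rho> x *\<^sub>v v) \<bullet>c v)"
      by (simp add: sum_distrib_left)
  qed
  finally show ?thesis .
qed

lemma mix_psd: assumes P: "\<And>x. psd d (\<rho> x)" and pos: "\<And>x. 0 \<le> \<pi> x"
  shows "psd d (mixture d \<pi> \<rho>)"
proof -
  have R: "\<And>x. \<rho> x \<in> carrier_mat d d" using P unfolding psd_def by auto
  have "(mixture d \<pi> \<rho> *\<^sub>v v) \<bullet>c v \<in> \<real> \<and> 0 \<le> Re ((mixture d \<pi> \<rho> *\<^sub>v v) \<bullet>c v)" if v: "v \<in> carrier_vec d" for v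
  proof -
    have e: "(mixture d \<pi> \<rho> *\<^sub>v v) \<bullet>c v = complex_of_real (\<Sum>x\<in>UNIV. \<pi> x * Re ((\<rho> x *\<^sub>v v) \<bullet>c v))"
      unfolding mix_qf[OF R v] of_real_sum by (intro sum.cong refl) (subst psd_real[OF P v], simp)
    have "0 \<le> (\<Sum>x\<in>UNIV. \<pi> x * Re ((\<rho> x *\<^sub>v v) \<bullet>c v))"
      by (intro sum_nonneg mult_nonneg_nonneg pos psd_re[OF P v])
    thus ?thesis unfolding e by simp
  qed
  thus ?thesis unfolding psd_def using mix_carrier by blast
qed

lemma mix_trace: assumes R: "\<And>x. \<rho> x \<in> carrier_mat d d"
  shows "mtrace (mixture d \<pi> \<rho>) = (\<Sum>x\<in>UNIV. complex_of_real (\<pi> x) * mtrace (\<rho> x))"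
proof -
  have "mtrace (mixture d \<pi> \<rho>) = (\<Sum>i<d. \<Sum>x\<in>UNIV. complex_of_real (\<pi> x) * \<rho> x $$ (i,i))"
    unfolding mtrace_def by (intro sum.cong) (auto simp: mixture_def)
  also have "\<dots> = (\<Sum>x\<in>UNIV. \<Sum>i<d. complex_of_real (\<pi> x) * \<rho> x $$ (i,i))" by (rule sum.swap)
  also have "\<dots> = (\<Sum>x\<in>UNIV. complex_of_real (\<pi> x) * mtrace (\<rho> x))"
  proof -
    have dr: "\<And>x. dim_row (\<rho> x) = d" using R by auto
    show ?thesis unfolding mtrace_def dr by (simp add: sum_distrib_left)
  qed
  finally show ?thesis .
qed


theorem proposition2:
  fixes d :: nat and \<rho> :: "'x::finite \<Rightarrow> complex mat"
  assumes "\<And>x. density_op d (\<rho> x)"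
  shows "barycentric_leakage d \<rho> =
    ereal (log 2 (Inf {\<mu>::real. \<exists>\<pi>\<in>pmfs.
       \<forall>x. op_le d (\<rho> x) (complex_of_real \<mu> \<cdot>\<^sub>m mixture d \<pi> \<rho>)}))"
proof -
  have P: "\<And>x. psd d (\<rho> x)" and tr: "\<And>x. mtrace (\<rho> x) = 1"
    using assms unfolding density_op_def by auto
  have R: "\<And>x. \<rho> x \<in> carrier_mat d d" using P unfolding psd_def by auto
  have spsd: "psd d (mixture d \<pi> \<rho>)" if "\<pi> \<in> pmfs" for \<pi>
    by (rule mix_psd[OF P]) (use that in \<open>auto simp: pmfs_def\<close>)
  have str: "mtrace (mixture d \<pi> \<rho>) = 1" if "\<pi> \<in> pmfs" for \<pi>
  proof -
    have "mtrace (mixture d \<pi> \<rho>) = complex_of_real (\<Sum>x\<in>UNIV. \<pi> x)"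
      unfolding mix_trace[OF R] tr of_real_sum by simp
    thus ?thesis using that unfolding pmfs_def by (simp del: of_real_sum)
  qed
  define T where "T = {\<mu>::real. \<exists>\<pi>\<in>pmfs. \<forall>x. op_le d (\<rho> x) (complex_of_real \<mu> \<cdot>\<^sub>m mixture d \<pi> \<rho>)}"
  define S where "S = (\<lambda>\<pi> x. {\<mu>::real. op_le d (\<rho> x) (complex_of_real \<mu> \<cdot>\<^sub>m mixture d \<pi> \<rho>)})"
  have ge1: "1 \<le> \<mu>" if "\<mu> \<in> T" for \<mu>
  proof -
    from that obtain \<pi> where \<pi>: "\<pi> \<in> pmfs" and le: "\<forall>x. op_le d (\<rho> x) (complex_of_real \<mu> \<cdot>\<^sub>m mixture d \<pi> \<rho>)"
      unfolding T_def by auto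
    show ?thesis using op_le_ge1[OF P spsd[OF \<pi>] tr str[OF \<pi>]] le by blast
  qed
  define n where "n = real (card (UNIV :: 'x set))"
  have n0: "0 < n" unfolding n_def by (simp add: finite_UNIV_card_ge_0)
  define \<pi>0 where "\<pi>0 = (\<lambda>x::'x. 1 / n)"
  have \<pi>0: "\<pi>0 \<in> pmfs" unfolding pmfs_def \<pi>0_def using n0 by (simp add: n_def)
  have nT: "n \<in> T"
  proof -
    have "op_le d (\<rho> x) (complex_of_real n \<cdot>\<^sub>m mixture d \<pi>0 \<rho>)" for x
    proof -
      have "Re ((\<rho> x *\<^sub>v v) \<bullet>c v) \<le> n * Re ((mixture d \<pi>0 \<rho> *\<^sub>v v) \<bullet>c v)" if v: "v \<in> carrier_vec d" for v
      proof -
        have "n * Re ((mixture d \<pi>0 \<rho> *\<^sub>v v) \<bullet>c v) = (\<Sum>y\<in>UNIV. Re ((\<rho> y *\<^sub>v v) \<bullet>c v))"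
          unfolding mix_qf[OF R v] \<pi>0_def using n0 by (simp add: sum_distrib_left)
        also have "Re ((\<rho> x *\<^sub>v v) \<bullet>c v) \<le> \<dots>"
          by (rule member_le_sum) (auto intro: psd_re[OF P v])
        finally show ?thesis by simp
      qed
      thus ?thesis unfolding op_le_iff[OF P spsd[OF \<pi>0]] by blast
    qed
    thus ?thesis unfolding T_def using \<pi>0 by blast
  qed
  have Tne: "T \<noteq> {}" using nT by auto
  have Tbdd: "bdd_below T" by (rule bdd_belowI[of _ 1]) (use ge1 in auto)
  define ms where "ms = Inf T"
  have ms1: "1 \<le> ms" unfolding ms_def using Tne ge1 by (auto intro: cInf_greatest)
  have Dm: "Dmax d (\<rho> x) (mixture d \<pi> \<rho>) = ereal (log 2 (Inf (S \<pi> x)))"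
    if "supp_op d (\<rho> x) \<subseteq> supp_op d (mixture d \<pi> \<rho>)" for \<pi> x
    using that unfolding Dmax_def S_def by simp
  have fin: "finite (range (\<lambda>x. Dmax d (\<rho> x) (mixture d \<pi> \<rho>)))" for \<pi> by simp
  have lower: "ereal (log 2 ms) \<le> Max (range (\<lambda>x. Dmax d (\<rho> x) (mixture d \<pi> \<rho>)))"
    if \<pi>: "\<pi> \<in> pmfs" for \<pi>
  proof (cases "\<forall>x. supp_op d (\<rho> x) \<subseteq> supp_op d (mixture d \<pi> \<rho>)")
    case False
    then obtain x where x: "\<not> supp_op d (\<rho> x) \<subseteq> supp_op d (mixture d \<pi> \<rho>)" by blast
    have "Dmax d (\<rho> x) (mixture d \<pi> \<rho>) = \<infinity>" using x unfolding Dmax_def by simp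
    moreover have "Dmax d (\<rho> x) (mixture d \<pi> \<rho>) \<le> Max (range (\<lambda>x. Dmax d (\<rho> x) (mixture d \<pi> \<rho>)))"
      by (rule Max_ge[OF fin]) auto
    ultimately show ?thesis by simp
  next
    case True
    define m where "m = (\<lambda>x. Inf (S \<pi> x))"
    have ex: "\<exists>\<mu>. op_le d (\<rho> x) (complex_of_real \<mu> \<cdot>\<^sub>m mixture d \<pi> \<rho>)" for x
      by (rule exists_mu[OF P spsd[OF \<pi>]]) (use True in auto)
    have mS: "op_le d (\<rho> x) (complex_of_real (m x) \<cdot>\<^sub>m mixture d \<pi> \<rho>)" and m1: "1 \<le> m x" for x
      using inf_mem[OF P spsd[OF \<pi>] tr str[OF \<pi>] ex] unfolding m_def S_def by auto
    have "Max (range m) \<in> range m" by (rule Max_in) auto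
    then obtain x0 where x0': "Max (range m) = m x0" by blast
    have x0: "m x0 = Max (range m)" using x0' by simp
    have mx: "m x \<le> m x0" for x unfolding x0 by (rule Max_ge) auto
    have "m x0 \<in> T" unfolding T_def using \<pi> op_le_mono[OF P spsd[OF \<pi>] mS mx] by blast
    hence "ms \<le> m x0" unfolding ms_def using Tbdd by (rule cInf_lower)
    hence "log 2 ms \<le> log 2 (m x0)" using ms1 by simp
    also have "ereal (log 2 (m x0)) = Dmax d (\<rho> x0) (mixture d \<pi> \<rho>)"
      using Dm[of x0 \<pi>] True unfolding m_def by simp
    also have "\<dots> \<le> Max (range (\<lambda>x. Dmax d (\<rho> x) (mixture d \<pi> \<rho>)))"
      by (rule Max_ge[OF fin]) auto
    finally show ?thesis by simp
  qed
  have upper: "barycentric_leakage d \<rho> \<le> ereal (log 2 \<mu>)" if \<mu>: "\<mu> \<in> T" for \<mu>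
  proof -
    from \<mu> obtain \<pi> where \<pi>: "\<pi> \<in> pmfs" and le: "\<forall>x. op_le d (\<rho> x) (complex_of_real \<mu> \<cdot>\<^sub>m mixture d \<pi> \<rho>)"
      unfolding T_def by auto
    have "barycentric_leakage d \<rho> \<le> Max (range (\<lambda>x. Dmax d (\<rho> x) (mixture d \<pi> \<rho>)))"
      unfolding barycentric_leakage_def by (rule INF_lower[OF \<pi>])
    also have "\<dots> \<le> ereal (log 2 \<mu>)"
    proof (rule Max.boundedI[OF fin])
      show "range (\<lambda>x. Dmax d (\<rho> x) (mixture d \<pi> \<rho>)) \<noteq> {}" by simp
      fix a assume "a \<in> range (\<lambda>x. Dmax d (\<rho> x) (mixture d \<pi> \<rho>))"
      then obtain x where a: "a = Dmax d (\<rho> x) (mixture d \<pi> \<rho>)" by auto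
      have sub: "supp_op d (\<rho> x) \<subseteq> supp_op d (mixture d \<pi> \<rho>)"
        using supp_sub[OF P spsd[OF \<pi>]] le by blast
      have ex: "\<exists>\<mu>. op_le d (\<rho> x) (complex_of_real \<mu> \<cdot>\<^sub>m mixture d \<pi> \<rho>)" using le by blast
      have i1: "1 \<le> Inf (S \<pi> x)" using inf_mem(2)[OF P spsd[OF \<pi>] tr str[OF \<pi>] ex] unfolding S_def .
      have bdd: "bdd_below (S \<pi> x)" unfolding S_def
        by (rule bdd_belowI[of _ 1]) (use op_le_ge1[OF P spsd[OF \<pi>] tr str[OF \<pi>]] in auto)
      have "Inf (S \<pi> x) \<le> \<mu>" by (rule cInf_lower[OF _ bdd]) (use le in \<open>auto simp: S_def\<close>)
      hence "log 2 (Inf (S \<pi> x)) \<le> log 2 \<mu>" using i1 by simp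
      thus "a \<le> ereal (log 2 \<mu>)" unfolding a Dm[OF sub] by simp
    qed
    finally show ?thesis .
  qed
  have "ereal (log 2 ms) \<le> barycentric_leakage d \<rho>"
    unfolding barycentric_leakage_def by (rule INF_greatest) (rule lower)
  moreover have "barycentric_leakage d \<rho> \<le> ereal (log 2 ms)"
  proof (rule ccontr)
    assume "\<not> barycentric_leakage d \<rho> \<le> ereal (log 2 ms)"
    hence lt: "ereal (log 2 ms) < barycentric_leakage d \<rho>" by simp
    have "barycentric_leakage d \<rho> \<le> ereal (log 2 n)" by (rule upper[OF nT])
    then obtain l where l: "barycentric_leakage d \<rho> = ereal l" using lt
      by (cases "barycentric_leakage d \<rho>") auto
    have "log 2 ms < l" using lt l by simp
    hence "ms < 2 powr l" using ms1 by (simp add: log_less_iff)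
    then obtain \<mu> where \<mu>: "\<mu> \<in> T" "\<mu> < 2 powr l" using cInf_lessD[OF Tne] unfolding ms_def by blast
    have "\<mu> > 0" using ge1[OF \<mu>(1)] by simp
    hence "log 2 \<mu> < l" using \<mu>(2) by (simp add: log_less_iff)
    moreover have "l \<le> log 2 \<mu>" using upper[OF \<mu>(1)] l by simp
    ultimately show False by simp
  qed
  ultimately show ?thesis unfolding ms_def T_def by simp
qed

end
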